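(* Let $Q\in\mathbf{R}^{n\times n}$ be orthogonal, $V\in\mathbf{R}^{m\times n}$ with $VV^T=I_m$, and suppose the pair $(Q,V)$ is observable. Then for every $\sigma\in\mathbf{C}$ with $|\sigma|<1$, the matrix $Q-(1-\sigma)QV^TV$ is Schur stable.
   Context: A real matrix $Q$ is orthogonal if $QQ^T=Q^TQ=I$. A matrix is Schur stable if all its eigenvalues have modulus $<1$. $(Q,V)$ observable means the standard observability condition (no eigenvector $w$ of $Q$ with $Vw=0$). *)

theory Defs
  imports "Jordan_Normal_Form.Jordan_Normal_Form"
begin

definition orthogonal_real_mat :: "nat \<Rightarrow> real mat \<Rightarrow> bool" where
  "orthogonal_real_mat n Q \<longleftrightarrow> Q \<in> carrier_mat n n \<and>
     Q * transpose_mat Q = 1\<^sub>m n \<and> transpose_mat Q * Q = 1\<^sub>m n"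

definition cmat :: "real mat \<Rightarrow> complex mat" where
  "cmat A = map_mat complex_of_real A"

definition schur_stable :: "complex mat \<Rightarrow> bool" where
  "schur_stable A \<longleftrightarrow> (\<forall>k. eigenvalue A k \<longrightarrow> cmod k < 1)"

definition observable :: "real mat \<Rightarrow> real mat \<Rightarrow> bool" where
  "observable Q V \<longleftrightarrow>
     \<not> (\<exists>w k. eigenvector (cmat Q) w k \<and> cmat V *\<^sub>v w = 0\<^sub>v (dim_row V))"

end

theory Submission imports Defs begin
definition hp :: "complex vec \<Rightarrow> complex vec \<Rightarrow> complex" where
  "hp x y = (\<Sum>i<dim_vec x. x$i * cnj (y$i))"

definition nsq :: "complex vec \<Rightarrow> real" where
  "nsq x = (\<Sum>i<dim_vec x. (cmod (x$i))^2)"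

lemma hp_self: "hp x x = complex_of_real (nsq x)"
  unfolding hp_def nsq_def of_real_sum by (intro sum.cong refl) (rule complex_norm_square[symmetric])

lemma nsq_nonneg: "nsq x \<ge> 0" unfolding nsq_def by (simp add: sum_nonneg)

lemma nsq_zero: assumes "x \<in> carrier_vec n" "nsq x = 0" shows "x = 0\<^sub>v n"
proof -
  have "\<forall>i\<in>{..<dim_vec x}. (cmod (x$i))^2 = 0"
    using assms(2) unfolding nsq_def by (subst sum_nonneg_eq_0_iff[symmetric]) auto
  thus ?thesis using assms(1) by (intro eq_vecI) auto
qed

lemma hp_cnj: assumes "x \<in> carrier_vec n" "y \<in> carrier_vec n" shows "hp y x = cnj (hp x y)"
  using assms unfolding hp_def by (simp add: mult.commute)

lemma hp_zero: "x \<in> carrier_vec n \<Longrightarrow> hp x (0\<^sub>v n) = 0" unfolding hp_def by simp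

lemma cmat_carrier[simp]: "A \<in> carrier_mat k n \<Longrightarrow> cmat A \<in> carrier_mat k n"
  unfolding cmat_def by simp

lemma cmat_mult: "A \<in> carrier_mat a b \<Longrightarrow> B \<in> carrier_mat b c \<Longrightarrow> cmat (A * B) = cmat A * cmat B"
  unfolding cmat_def by (rule of_real_hom.mat_hom_mult)

lemma cmat_one: "cmat (1\<^sub>m n) = 1\<^sub>m n" unfolding cmat_def by (intro eq_matI) auto

lemma cmat_transpose: "transpose_mat (cmat A) = cmat (transpose_mat A)"
  unfolding cmat_def by (simp add: map_mat_transpose)

lemma hp_adj:
  assumes A: "A \<in> carrier_mat k n" and x: "x \<in> carrier_vec n" and y: "y \<in> carrier_vec k"
  shows "hp (cmat A *\<^sub>v x) y = hp x (cmat (transpose_mat A) *\<^sub>v y)"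
proof -
  have "hp (cmat A *\<^sub>v x) y = (\<Sum>i<k. \<Sum>j<n. of_real (A$$(i,j)) * x$j * cnj (y$i))"
    using A x y unfolding hp_def cmat_def
    by (simp add: mult_mat_vec_def scalar_prod_def sum_distrib_right atLeast0LessThan)
  also have "\<dots> = (\<Sum>j<n. \<Sum>i<k. of_real (A$$(i,j)) * x$j * cnj (y$i))"
    by (rule sum.swap)
  also have "\<dots> = hp x (cmat (transpose_mat A) *\<^sub>v y)"
    using A x y unfolding hp_def cmat_def
    by (simp add: mult_mat_vec_def scalar_prod_def sum_distrib_left atLeast0LessThan ac_simps)
  finally show ?thesis .
qed

lemma smult_mat_mult_vec: "A \<in> carrier_mat a b \<Longrightarrow> v \<in> carrier_vec b \<Longrightarrow> (c \<cdot>\<^sub>m A) *\<^sub>v v = c \<cdot>\<^sub>v (A *\<^sub>v v)"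
  by (intro eq_vecI) (auto simp: scalar_prod_def sum_distrib_left ac_simps)

lemma hp_smult: "x \<in> carrier_vec n \<Longrightarrow> y \<in> carrier_vec n \<Longrightarrow> hp (a \<cdot>\<^sub>v x) (b \<cdot>\<^sub>v y) = a * cnj b * hp x y"
  unfolding hp_def by (simp add: sum_distrib_left ac_simps)

lemma hp_expand:
  assumes u: "u \<in> carrier_vec n" and x: "x \<in> carrier_vec n"
  shows "hp (x - c \<cdot>\<^sub>v u) (x - c \<cdot>\<^sub>v u) = (1-c) * cnj (1-c) * hp u u + (1-c) * hp u (x - u) + cnj (1-c) * hp (x - u) u + hp (x - u) (x - u)"
    and "hp x x = hp u u + hp u (x - u) + hp (x - u) u + hp (x - u) (x - u)"
  using u x unfolding hp_def
  by (simp_all add: sum_distrib_left sum.distrib[symmetric] algebra_simps)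

theorem proposition1:
  fixes Q V :: "real mat" and n m :: nat and s :: complex
  assumes "orthogonal_real_mat n Q"
    and "V \<in> carrier_mat m n"
    and "V * transpose_mat V = 1\<^sub>m m"
    and "observable Q V"
    and "cmod s < 1"
  shows "schur_stable (cmat Q - (1 - s) \<cdot>\<^sub>m (cmat Q * transpose_mat (cmat V) * cmat V))"
  unfolding schur_stable_def
proof (intro allI impI)
  fix k assume ev: "eigenvalue (cmat Q - (1 - s) \<cdot>\<^sub>m (cmat Q * transpose_mat (cmat V) * cmat V)) k"
  have Q: "Q \<in> carrier_mat n n" and QtQ: "transpose_mat Q * Q = 1\<^sub>m n"
    using assms(1) unfolding orthogonal_real_mat_def by auto
  have V: "V \<in> carrier_mat m n" by fact
  define cQ where "cQ = cmat Q"
  define cV where "cV = cmat V"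
  define cVt where "cVt = cmat (transpose_mat V)"
  define cQt where "cQt = cmat (transpose_mat Q)"
  have cQ: "cQ \<in> carrier_mat n n" and cV: "cV \<in> carrier_mat m n" and cVt: "cVt \<in> carrier_mat n m"
    and cQt: "cQt \<in> carrier_mat n n"
    using Q V unfolding cQ_def cV_def cVt_def cQt_def by auto
  have tV: "transpose_mat (cmat V) = cVt" unfolding cVt_def cmat_transpose ..
  define M where "M = cQ - (1 - s) \<cdot>\<^sub>m (cQ * cVt * cV)"
  have M: "M \<in> carrier_mat n n" using cQ cV cVt unfolding M_def by auto
  from ev obtain x where "eigenvector M x k" unfolding eigenvalue_def M_def tV cQ_def cV_def by auto
  hence x: "x \<in> carrier_vec n" and x0: "x \<noteq> 0\<^sub>v n" and Mx: "M *\<^sub>v x = k \<cdot>\<^sub>v x"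
    unfolding eigenvector_def using M by auto
  define y where "y = cV *\<^sub>v x"
  define u where "u = cVt *\<^sub>v y"
  define w where "w = x - u"
  define z where "z = x - (1 - s) \<cdot>\<^sub>v u"
  have y: "y \<in> carrier_vec m" using cV x unfolding y_def by auto
  have u: "u \<in> carrier_vec n" using cVt y unfolding u_def by auto
  have w: "w \<in> carrier_vec n" using u x unfolding w_def by auto
  have z: "z \<in> carrier_vec n" using u x unfolding z_def by auto
  have VVt: "cV * cVt = 1\<^sub>m m"
    using cmat_mult[OF V, of "transpose_mat V" m] assms(3) V unfolding cV_def cVt_def by (simp add: cmat_one)
  have QtQc: "cQt * cQ = 1\<^sub>m n"
    using cmat_mult[OF _ Q, of "transpose_mat Q" n] QtQ Q unfolding cQ_def cQt_def by (simp add: cmat_one)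
  have Vu: "cV *\<^sub>v u = y"
    unfolding u_def using assoc_mult_mat_vec[OF cV cVt y, symmetric] VVt y by simp
  have Vw: "cV *\<^sub>v w = 0\<^sub>v m"
    unfolding w_def using mult_minus_distrib_mat_vec[OF cV x u] Vu y unfolding y_def by simp
  have "M *\<^sub>v x = cQ *\<^sub>v x - ((1 - s) \<cdot>\<^sub>m (cQ * cVt * cV)) *\<^sub>v x"
    unfolding M_def using cQ cVt cV x by (intro minus_mult_distrib_mat_vec) auto
  also have "((1 - s) \<cdot>\<^sub>m (cQ * cVt * cV)) *\<^sub>v x = (1 - s) \<cdot>\<^sub>v (cQ *\<^sub>v u)"
  proof -
    have "(cQ * cVt * cV) *\<^sub>v x = (cQ * cVt) *\<^sub>v y"
      unfolding y_def by (rule assoc_mult_mat_vec[OF mult_carrier_mat[OF cQ cVt] cV x])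
    also have "\<dots> = cQ *\<^sub>v u" unfolding u_def by (rule assoc_mult_mat_vec[OF cQ cVt y])
    finally show ?thesis using smult_mat_mult_vec[OF mult_carrier_mat[OF mult_carrier_mat[OF cQ cVt] cV] x] by simp
  qed
  also have "cQ *\<^sub>v x - (1 - s) \<cdot>\<^sub>v (cQ *\<^sub>v u) = cQ *\<^sub>v z"
    unfolding z_def using cQ x u by (simp add: mult_minus_distrib_mat_vec mult_mat_vec)
  finally have Qz: "cQ *\<^sub>v z = k \<cdot>\<^sub>v x" using Mx by simp
  have "hp (cQ *\<^sub>v z) (cQ *\<^sub>v z) = hp z (cQt *\<^sub>v (cQ *\<^sub>v z))"
    unfolding cQ_def cQt_def using hp_adj[OF Q z] cQ z cQ_def by auto
  also have "cQt *\<^sub>v (cQ *\<^sub>v z) = z"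
    using assoc_mult_mat_vec[OF cQt cQ z, symmetric] QtQc z by simp
  finally have "hp z z = k * cnj k * hp x x" using Qz hp_smult[OF x x] by simp
  hence E1: "hp z z = complex_of_real ((cmod k)^2 * nsq x)"
    by (simp add: hp_self complex_norm_square[symmetric])
  have huw: "hp u w = 0"
    unfolding u_def using hp_adj[of "transpose_mat V" n m, OF _ y w] V Vw
    by (simp add: cVt_def cV_def[symmetric] hp_zero[OF y])
  have hwu: "hp w u = 0" using hp_cnj[OF u w] huw by simp
  have E2: "hp z z = complex_of_real ((cmod s)^2 * nsq u + nsq w)"
    using hp_expand(1)[OF u x, of "1 - s"] huw hwu unfolding z_def w_def[symmetric]
    by (simp add: hp_self complex_norm_square[symmetric])
  have E3: "nsq x = nsq u + nsq w"
    using hp_expand(2)[OF u x] huw hwu unfolding w_def[symmetric] by (simp add: hp_self flip: of_real_add)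
  have R: "(cmod k)^2 * (nsq u + nsq w) = (cmod s)^2 * nsq u + nsq w"
    using E1 E2 E3 of_real_eq_iff by metis
  show "cmod k < 1"
  proof (rule ccontr)
    assume "\<not> cmod k < 1"
    hence k1: "(cmod k)^2 \<ge> 1" by (simp add: one_le_power)
    have s1: "(cmod s)^2 < 1" using assms(5) by (simp add: power_less_one_iff abs_square_less_1)
    have nu: "nsq u \<ge> 0" "nsq w \<ge> 0" by (rule nsq_nonneg)+
    have "((cmod k)^2 - (cmod s)^2) * nsq u + ((cmod k)^2 - 1) * nsq w = 0"
      using R by (simp add: algebra_simps)
    moreover have "((cmod k)^2 - 1) * nsq w \<ge> 0" using k1 nu by simp
    moreover have "((cmod k)^2 - (cmod s)^2) * nsq u \<ge> 0" using k1 s1 nu by (intro mult_nonneg_nonneg) linarith+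
    ultimately have "((cmod k)^2 - (cmod s)^2) * nsq u = 0" by linarith
    moreover have "(cmod k)^2 - (cmod s)^2 \<noteq> 0" using k1 s1 by linarith
    ultimately have "nsq u = 0" by simp
    hence u0: "u = 0\<^sub>v n" using nsq_zero[OF u] by simp
    have y0: "y = 0\<^sub>v m" using Vu u0 cV by auto
    have "z = x" unfolding z_def u0 using x by auto
    hence "eigenvector cQ x k" unfolding eigenvector_def using Qz x x0 cQ by auto
    moreover have "cV *\<^sub>v x = 0\<^sub>v (dim_row V)" using y0 V unfolding y_def by simp
    ultimately show False using assms(4) unfolding observable_def cQ_def cV_def by auto
  qed
qed

end
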